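(* Let $\mathbb{F}\in\{\mathbb{R},\mathbb{C}\}$ and $M>N$. Let $\Phi=\{\varphi_i\}_{i=1}^M$ be a Parseval frame for $\mathbb{F}^N$ and let $\Psi=\{\psi_i\}_{i=1}^M$ be a Naimark complement of $\Phi$. Then $TC(\Phi)=TC(\Psi)$.
   Context: A Parseval frame for $\mathbb{F}^N$ is a family $\Phi=\{\varphi_i\}_{i=1}^M\subseteq\mathbb{F}^N$ such that, viewing $\Phi$ as the $N\times M$ matrix with columns $\varphi_i$, $\Phi\Phi^*=I$. A Naimark complement of a Parseval frame $\Phi$ for $\mathbb{F}^N$ is any family $\Psi=\{\psi_i\}_{i=1}^M\subseteq\mathbb{F}^{M-N}$ with $\Psi^*\Psi=I-\Phi^*\Phi$ (it is then a Parseval frame for $\mathbb{F}^{M-N}$). The total coherence of a family $\Phi$ is $TC(\Phi)=\sum_{i\neq j}|\langle\varphi_i,\varphi_j\rangle|$. *)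

theory Defs
  imports Complex_Main
begin

text \<open>A family of M vectors in F^n is represented as Phi :: nat => nat => F,
  where Phi i k is the k-th coordinate (k < n) of the i-th vector (i < M).
  Two versions: F = real and F = complex.\<close>

definition inner_c :: "nat \<Rightarrow> (nat \<Rightarrow> complex) \<Rightarrow> (nat \<Rightarrow> complex) \<Rightarrow> complex" where
  "inner_c n x y = (\<Sum>k<n. x k * cnj (y k))"

text \<open>Phi Phi^* = I (N x N), columns of Phi are the vectors.\<close>
definition parseval_c :: "nat \<Rightarrow> nat \<Rightarrow> (nat \<Rightarrow> nat \<Rightarrow> complex) \<Rightarrow> bool" where
  "parseval_c N M Phi \<longleftrightarrow>
     (\<forall>a<N. \<forall>b<N. (\<Sum>i<M. Phi i a * cnj (Phi i b)) = (if a = b then 1 else 0))"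

text \<open>Psi^* Psi = I - Phi^* Phi (M x M), Psi consists of M vectors in F^(M-N).\<close>
definition naimark_c :: "nat \<Rightarrow> nat \<Rightarrow> (nat \<Rightarrow> nat \<Rightarrow> complex) \<Rightarrow> (nat \<Rightarrow> nat \<Rightarrow> complex) \<Rightarrow> bool" where
  "naimark_c N M Phi Psi \<longleftrightarrow>
     (\<forall>i<M. \<forall>j<M. (\<Sum>k<M - N. cnj (Psi i k) * Psi j k)
        = (if i = j then 1 else 0) - (\<Sum>k<N. cnj (Phi i k) * Phi j k))"

definition TC_c :: "nat \<Rightarrow> nat \<Rightarrow> (nat \<Rightarrow> nat \<Rightarrow> complex) \<Rightarrow> real" where
  "TC_c n M Phi = (\<Sum>i<M. \<Sum>j<M. if i \<noteq> j then cmod (inner_c n (Phi i) (Phi j)) else 0)"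

definition inner_r :: "nat \<Rightarrow> (nat \<Rightarrow> real) \<Rightarrow> (nat \<Rightarrow> real) \<Rightarrow> real" where
  "inner_r n x y = (\<Sum>k<n. x k * y k)"

definition parseval_r :: "nat \<Rightarrow> nat \<Rightarrow> (nat \<Rightarrow> nat \<Rightarrow> real) \<Rightarrow> bool" where
  "parseval_r N M Phi \<longleftrightarrow>
     (\<forall>a<N. \<forall>b<N. (\<Sum>i<M. Phi i a * Phi i b) = (if a = b then 1 else 0))"

definition naimark_r :: "nat \<Rightarrow> nat \<Rightarrow> (nat \<Rightarrow> nat \<Rightarrow> real) \<Rightarrow> (nat \<Rightarrow> nat \<Rightarrow> real) \<Rightarrow> bool" where
  "naimark_r N M Phi Psi \<longleftrightarrow>
     (\<forall>i<M. \<forall>j<M. (\<Sum>k<M - N. Psi i k * Psi j k)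
        = (if i = j then 1 else 0) - (\<Sum>k<N. Phi i k * Phi j k))"

definition TC_r :: "nat \<Rightarrow> nat \<Rightarrow> (nat \<Rightarrow> nat \<Rightarrow> real) \<Rightarrow> real" where
  "TC_r n M Phi = (\<Sum>i<M. \<Sum>j<M. if i \<noteq> j then \<bar>inner_r n (Phi i) (Phi j)\<bar> else 0)"

end

theory Submission
  imports Defs
begin

lemma real_part:
  assumes "naimark_r N M Phi Psi"
  shows "TC_r N M Phi = TC_r (M - N) M Psi"
  unfolding TC_r_def
proof (intro sum.cong refl)
  fix i j assume i: "i \<in> {..<M}" and j: "j \<in> {..<M}"
  have "i \<noteq> j \<Longrightarrow> inner_r (M - N) (Psi i) (Psi j) = - inner_r N (Phi i) (Phi j)"
    using assms i j unfolding naimark_r_def inner_r_def by auto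
  then show "(if i \<noteq> j then \<bar>inner_r N (Phi i) (Phi j)\<bar> else 0) =
        (if i \<noteq> j then \<bar>inner_r (M - N) (Psi i) (Psi j)\<bar> else 0)" by auto
qed

lemma complex_part:
  assumes "naimark_c N M Phi Psi"
  shows "TC_c N M Phi = TC_c (M - N) M Psi"
  unfolding TC_c_def
proof (intro sum.cong refl)
  fix i j assume i: "i \<in> {..<M}" and j: "j \<in> {..<M}"
  have "i \<noteq> j \<Longrightarrow> inner_c (M - N) (Psi i) (Psi j) = - cnj (inner_c N (Phi j) (Phi i))"
  proof -
    assume ij: "i \<noteq> j"
    have e: "(\<Sum>k<M - N. cnj (Psi i k) * Psi j k) = - (\<Sum>k<N. cnj (Phi i k) * Phi j k)"
      using assms i j ij unfolding naimark_c_def by auto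
    have "inner_c (M - N) (Psi i) (Psi j) = cnj (\<Sum>k<M - N. cnj (Psi i k) * Psi j k)"
      unfolding inner_c_def by (simp add: mult.commute)
    also have "\<dots> = - cnj (\<Sum>k<N. cnj (Phi i k) * Phi j k)" by (simp add: e)
    also have "(\<Sum>k<N. cnj (Phi i k) * Phi j k) = inner_c N (Phi j) (Phi i)"
      unfolding inner_c_def by (simp add: mult.commute)
    finally show ?thesis .
  qed
  moreover have "cmod (inner_c N (Phi j) (Phi i)) = cmod (inner_c N (Phi i) (Phi j))"
  proof -
    have "inner_c N (Phi j) (Phi i) = cnj (inner_c N (Phi i) (Phi j))"
      unfolding inner_c_def by (simp add: mult.commute)
    then show ?thesis by simp
  qed
  ultimately show "(if i \<noteq> j then cmod (inner_c N (Phi i) (Phi j)) else 0) =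
        (if i \<noteq> j then cmod (inner_c (M - N) (Psi i) (Psi j)) else 0)" by auto
qed

theorem proposition1:
  shows "(\<forall>(N::nat) (M::nat) (Phi::nat \<Rightarrow> nat \<Rightarrow> real) Psi.
            N < M \<and> parseval_r N M Phi \<and> naimark_r N M Phi Psi
              \<longrightarrow> TC_r N M Phi = TC_r (M - N) M Psi)
       \<and> (\<forall>(N::nat) (M::nat) (Phi::nat \<Rightarrow> nat \<Rightarrow> complex) Psi.
            N < M \<and> parseval_c N M Phi \<and> naimark_c N M Phi Psi
              \<longrightarrow> TC_c N M Phi = TC_c (M - N) M Psi)"
  using real_part complex_part by blast

end
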